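(* Let $K\in C^1(\mathbf{R}^d\times\mathbf{R}^d,\mathbf{R}^d)$ satisfy (HK1) and (HK2). Let $F_N^{in}$ be a symmetric Borel probability measure on $(\mathbf{R}^d)^N$ with finite first moment, and let $F_N(t)=T_t\#F_N^{in}$, $t\in\mathbf{R}$, where $T_t$ is the flow of $\dot z_i=\frac1N\sum_{j=1}^NK(z_i,z_j)$, $i=1,\ldots,N$. Then the marginals $F_{N:j}$, $j=1,\ldots,N$, are a weak solution of $$\partial_tF_{N:1}+\tfrac{N-1}{N}\operatorname{div}_{z_1}[K(z_1,z_2)F_{N:2}]_{:1}=0,$$ $$\partial_tF_{N:j}+\tfrac{N-j}{N}\sum_{l=1}^j\operatorname{div}_{z_l}[K(z_l,z_{j+1})F_{N:j+1}]_{:j}+\tfrac1N\sum_{k,l=1}^j\operatorname{div}_{z_l}(K(z_l,z_k)F_{N:j})=0,\quad j=2,\ldots,N-1,$$ $$\partial_tF_{N:N}+\tfrac1N\sum_{k,l=1}^N\operatorname{div}_{z_l}(K(z_l,z_k)F_{N:N})=0,$$ with $F_{N:j}\big|_{t=0}=F^{in}_{N:j}$, $j=1,\ldots,N$. Explicitly, for each $1\le j\le N$ and each $\phi\in C^1_b((\mathbf{R}^d)^j)$, $$\frac{d}{dt}\int\phi\,dF_{N:j}=\frac1N\sum_{k,l=1}^j\int K(z_l,z_k)\cdot\nabla_{z_l}\phi\,dF_{N:j}+\frac{N-j}{N}\sum_{l=1}^j\int K(z_l,z_{j+1})\cdot\nabla_{z_l}\phi(z_1,\ldots,z_j)\,dF_{N:j+1}$$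 (the last sum being absent when $j=N$).
   Context: (HK1): $K(z,z')=-K(z',z)$. (HK2): there is $L\ge0$ with $\sup_{z'}|\nabla_zK|\le L$, $\sup_z|\nabla_{z'}K|\le L$. A probability $P_N$ on $(\mathbf{R}^d)^N$ is symmetric if $S_\sigma\#P_N=P_N$ for all permutations $\sigma$, where $S_\sigma(z_1,\ldots,z_N)=(z_{\sigma(1)},\ldots,z_{\sigma(N)})$. The $k$-particle marginal $P_{N:k}$ is the push-forward of $P_N$ by $(z_1,\ldots,z_N)\mapsto(z_1,\ldots,z_k)$; by convention $P_{N:k}=0$ for $k>N$. $[K(z_l,z_{j+1})F_{N:j+1}]_{:j}$ is the (vector) measure on $(\mathbf{R}^d)^j$ defined by $\langle[K(z_l,z_{j+1})F_{N:j+1}]_{:j},\phi\rangle=\int\phi(z_1,\ldots,z_j)K(z_l,z_{j+1})F_{N:j+1}(dz_1\ldots dz_{j+1})$. *)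

theory Defs
  imports "HOL-Probability.Probability" "HOL-Combinatorics.Permutations"
begin

text \<open>Configurations of n particles in R^d are functions nat => 'a on the index set
  {..<n} (indices 0..n-1 correspond to 1..n in the paper), with the product Borel structure.\<close>

definition cfg_space :: "nat \<Rightarrow> (nat \<Rightarrow> 'a::euclidean_space) measure" where
  "cfg_space n = PiM {..<n} (\<lambda>_. borel)"

definition marg :: "(nat \<Rightarrow> 'a::euclidean_space) measure \<Rightarrow> nat \<Rightarrow> (nat \<Rightarrow> 'a) measure" where
  "marg P k = distr P (cfg_space k) (\<lambda>z. restrict z {..<k})"

definition symmetric_measure :: "nat \<Rightarrow> (nat \<Rightarrow> 'a::euclidean_space) measure \<Rightarrow> bool" where
  "symmetric_measure n P \<longleftrightarrow>
     (\<forall>\<sigma>. \<sigma> permutes {..<n} \<longrightarrow> distr P (cfg_space n) (\<lambda>z. restrict (z \<circ> \<sigma>) {..<n}) = P)"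

text \<open>Directional partial derivative of phi in the variable z_l along v,
  i.e. v . grad_{z_l} phi(z).\<close>
definition pder :: "((nat \<Rightarrow> 'a::euclidean_space) \<Rightarrow> real) \<Rightarrow> (nat \<Rightarrow> 'a) \<Rightarrow> nat \<Rightarrow> 'a \<Rightarrow> real" where
  "pder \<phi> z l v = frechet_derivative (\<lambda>x. \<phi> (z(l := x))) (at (z l)) v"

definition C1b :: "nat \<Rightarrow> ((nat \<Rightarrow> 'a::euclidean_space) \<Rightarrow> real) \<Rightarrow> bool" where
  "C1b k \<phi> \<longleftrightarrow>
     continuous_on (space (cfg_space k)) \<phi> \<and>
     bounded (\<phi> ` space (cfg_space k)) \<and>
     (\<forall>l<k. \<forall>z\<in>space (cfg_space k). (\<lambda>x. \<phi> (z(l := x))) differentiable (at (z l))) \<and>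
     (\<forall>l<k. \<forall>v. continuous_on (space (cfg_space k)) (\<lambda>z. pder \<phi> z l v)) \<and>
     (\<exists>B. \<forall>l<k. \<forall>z\<in>space (cfg_space k). \<forall>v. \<bar>pder \<phi> z l v\<bar> \<le> B * norm v)"

definition C1_kernel :: "('a::euclidean_space \<Rightarrow> 'a \<Rightarrow> 'a) \<Rightarrow> bool" where
  "C1_kernel K \<longleftrightarrow>
     (\<lambda>p. K (fst p) (snd p)) differentiable_on UNIV \<and>
     (\<forall>v. continuous_on UNIV (\<lambda>p. frechet_derivative (\<lambda>q. K (fst q) (snd q)) (at p) v))"

definition is_flow :: "nat \<Rightarrow> ('a::euclidean_space \<Rightarrow> 'a \<Rightarrow> 'a) \<Rightarrow> (real \<Rightarrow> (nat \<Rightarrow> 'a) \<Rightarrow> (nat \<Rightarrow> 'a)) \<Rightarrow> bool" where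
  "is_flow N K T \<longleftrightarrow>
     (\<forall>z\<in>space (cfg_space N).
        T 0 z = z \<and> (\<forall>t. T t z \<in> space (cfg_space N)) \<and>
        (\<forall>i<N. \<forall>t. ((\<lambda>s. T s z i) has_vector_derivative
            ((1 / real N) *\<^sub>R (\<Sum>j<N. K (T t z i) (T t z j)))) (at t)))"

end

theory Submission
  imports Defs
begin


lemma space_cfg: "space (cfg_space n) = (PiE {..<n} (\<lambda>_. UNIV))"
  by (simp add: cfg_space_def space_PiM)

lemma tendsto_fun_iff:
  fixes f :: "'b \<Rightarrow> nat \<Rightarrow> 'a::topological_space"
  shows "(f \<longlongrightarrow> l) F \<longleftrightarrow> (\<forall>i. ((\<lambda>c. f c i) \<longlongrightarrow> l i) F)"
proof -
  have "(f \<longlongrightarrow> l) F \<longleftrightarrow> limitin (product_topology (\<lambda>_. euclidean) UNIV) f l F"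
    by (simp add: euclidean_product_topology)
  also have "\<dots> \<longleftrightarrow> (\<forall>i. ((\<lambda>c. f c i) \<longlongrightarrow> l i) F)"
    by (simp add: limitin_componentwise)
  finally show ?thesis .
qed

lemma id_meas_cfg: "(\<lambda>z. z) \<in> borel_measurable (cfg_space n :: (nat \<Rightarrow> 'a::euclidean_space) measure)"
proof (rule measurable_coordinatewise_then_product)
  fix i :: nat
  show "(\<lambda>x. x i) \<in> borel_measurable (cfg_space n :: (nat \<Rightarrow> 'a::euclidean_space) measure)"
  proof (cases "i < n")
    case True then show ?thesis unfolding cfg_space_def
      by (auto intro: measurable_component_singleton)
  next
    case False
    have "(\<lambda>x::nat\<Rightarrow>'a. undefined::'a) \<in> borel_measurable (cfg_space n)" by simp
    then show ?thesis
      by (rule measurable_cong[THEN iffD1, rotated]) (auto simp: space_cfg PiE_def extensional_def False)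
  qed
qed

lemma cont_meas_cfg:
  fixes g :: "(nat \<Rightarrow> 'a::euclidean_space) \<Rightarrow> 'b::{second_countable_topology,topological_space}"
  assumes "continuous_on (space (cfg_space n)) g"
  shows "g \<in> borel_measurable (cfg_space n)"
proof -
  define e where "e = (\<lambda>w::nat\<Rightarrow>'a. restrict w {..<n})"
  have ce: "continuous_on UNIV e"
    unfolding e_def
  proof (intro continuous_on_coordinatewise_then_product)
    fix i show "continuous_on UNIV (\<lambda>x::nat\<Rightarrow>'a. restrict x {..<n} i)"
      by (cases "i < n") (auto simp: restrict_def)
  qed
  have "continuous_on UNIV (\<lambda>x. g (e x))"
    by (rule continuous_on_compose2[OF assms ce]) (simp add: e_def space_cfg image_subset_iff)
  then have "(\<lambda>x. g (e x)) \<in> borel_measurable borel"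
    by (rule borel_measurable_continuous_onI)
  then have "(\<lambda>x. g (e x)) \<in> borel_measurable (cfg_space n)"
    using measurable_compose[OF id_meas_cfg] by blast
  then show ?thesis
    by (rule measurable_cong[THEN iffD1, rotated]) (auto simp: e_def space_cfg PiE_restrict)
qed

lemma deriv_norm2:
  fixes f :: "real \<Rightarrow> 'a::real_inner"
  assumes "(f has_vector_derivative f') (at s)"
  shows "((\<lambda>s. (norm (f s))\<^sup>2) has_real_derivative 2 * inner (f s) f') (at s)"
proof -
  have "((\<lambda>s. inner (f s) (f s)) has_derivative (\<lambda>h. inner (f s) (h *\<^sub>R f') + inner (h *\<^sub>R f') (f s))) (at s)"
    using assms unfolding has_vector_derivative_def by (intro has_derivative_inner)
  then show ?thesis unfolding has_field_derivative_def power2_norm_eq_inner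
    by (rule has_derivative_eq_rhs) (auto simp: inner_commute algebra_simps fun_eq_iff)
qed

lemma sum_sq_le_sq_sum:
  fixes a :: "nat \<Rightarrow> real"
  assumes "\<And>i. i \<in> A \<Longrightarrow> a i \<ge> 0"
  shows "(\<Sum>i\<in>A. (a i)\<^sup>2) \<le> (\<Sum>i\<in>A. a i)\<^sup>2"
  using assms
proof (induction A rule: infinite_finite_induct)
  case (insert x F)
  have "0 \<le> a x * (\<Sum>i\<in>F. a i)" using insert by (simp add: sum_nonneg)
  then show ?case using insert by (simp add: power2_eq_square algebra_simps)
qed auto

locale ctx =
  fixes K :: "'a::euclidean_space \<Rightarrow> 'a \<Rightarrow> 'a"
    and N :: nat and L :: real
    and T :: "real \<Rightarrow> (nat \<Rightarrow> 'a) \<Rightarrow> (nat \<Rightarrow> 'a)"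
  assumes K_C1: "C1_kernel K"
    and HK1: "\<And>z z'. K z z' = - K z' z"
    and L_nonneg: "L \<ge> 0"
    and HK2a: "\<And>z z' v. norm (frechet_derivative (\<lambda>x. K x z') (at z) v) \<le> L * norm v"
    and HK2b: "\<And>z z' v. norm (frechet_derivative (\<lambda>y. K z y) (at z') v) \<le> L * norm v"
    and flow: "is_flow N K T"
    and Npos: "0 < N"
begin

lemma K_diag: "K x x = 0"
proof -
  have h: "K x x = - K x x" by (rule HK1)
  have "K x x + K x x = 0" using h by (metis add.right_inverse)
  then have "2 *\<^sub>R K x x = 0" by (simp add: scaleR_2)
  then show ?thesis by simp
qed

lemma K_diff_joint: "(\<lambda>p. K (fst p) (snd p)) differentiable (at p)"
  using K_C1 unfolding C1_kernel_def differentiable_on_def by (cases p) auto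

lemma K_cont_joint: "continuous_on UNIV (\<lambda>p. K (fst p) (snd p))"
  using K_diff_joint by (simp add: continuous_at_imp_continuous_on differentiable_imp_continuous_within)

lemma K_diff1: "(\<lambda>x. K x y) differentiable (at x)"
proof -
  have "(\<lambda>x. (x, y)) differentiable (at x)"
    by (rule differentiableI, auto intro!: derivative_eq_intros)
  from differentiable_chain_at[OF this K_diff_joint] show ?thesis by (simp add: o_def)
qed

lemma K_diff2: "(\<lambda>y. K x y) differentiable (at y)"
proof -
  have "(\<lambda>y. (x, y)) differentiable (at y)"
    by (rule differentiableI, auto intro!: derivative_eq_intros)
  from differentiable_chain_at[OF this K_diff_joint] show ?thesis by (simp add: o_def)
qed

lemma K_lip1: "norm (K x y - K x' y) \<le> L * norm (x - x')"
proof (rule differentiable_bound[where S=UNIV and f="\<lambda>x. K x y"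
      and f'="\<lambda>x. frechet_derivative (\<lambda>x. K x y) (at x)"])
  fix z :: 'a
  show "((\<lambda>x. K x y) has_derivative frechet_derivative (\<lambda>x. K x y) (at z)) (at z within UNIV)"
    using K_diff1 frechet_derivative_works by auto
  show "onorm (frechet_derivative (\<lambda>x. K x y) (at z)) \<le> L"
    by (rule onorm_le) (rule HK2a)
qed auto

lemma K_lip2: "norm (K x y - K x y') \<le> L * norm (y - y')"
proof (rule differentiable_bound[where S=UNIV and f="\<lambda>y. K x y"
      and f'="\<lambda>y. frechet_derivative (\<lambda>y. K x y) (at y)"])
  fix z :: 'a
  show "((\<lambda>y. K x y) has_derivative frechet_derivative (\<lambda>y. K x y) (at z)) (at z within UNIV)"
    using K_diff2 frechet_derivative_works by auto
  show "onorm (frechet_derivative (\<lambda>y. K x y) (at z)) \<le> L"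
    by (rule onorm_le) (rule HK2b)
qed auto

lemma K_lip: "norm (K x y - K x' y') \<le> L * (norm (x - x') + norm (y - y'))"
proof -
  have "norm (K x y - K x' y') \<le> norm (K x y - K x' y) + norm (K x' y - K x' y')"
    using norm_triangle_ineq[of "K x y - K x' y" "K x' y - K x' y'"] by simp
  also have "\<dots> \<le> L * norm (x - x') + L * norm (y - y')"
    using K_lip1 K_lip2 by (rule add_mono)
  finally show ?thesis by (simp add: algebra_simps)
qed

lemma K_bound: "norm (K x y) \<le> L * (norm x + norm y)"
  using K_lip[of x y 0 0] by (simp add: K_diag)

end


context ctx begin

definition V :: "(nat \<Rightarrow> 'a) \<Rightarrow> nat \<Rightarrow> 'a" where
  "V w i = (1 / real N) *\<^sub>R (\<Sum>j<N. K (w i) (w j))"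

definition is_sol :: "(real \<Rightarrow> nat \<Rightarrow> 'a) \<Rightarrow> bool" where
  "is_sol u \<longleftrightarrow> (\<forall>i<N. \<forall>s. ((\<lambda>s. u s i) has_vector_derivative V (u s) i) (at s))"

definition Dst :: "(real \<Rightarrow> nat \<Rightarrow> 'a) \<Rightarrow> (real \<Rightarrow> nat \<Rightarrow> 'a) \<Rightarrow> real \<Rightarrow> real" where
  "Dst u v s = (\<Sum>i<N. (norm (u s i - v s i))\<^sup>2)"

lemma V_lip: "norm (V u i - V v i) \<le> L * norm (u i - v i) + (L / real N) * (\<Sum>j<N. norm (u j - v j))"
proof -
  have "V u i - V v i = (1 / real N) *\<^sub>R (\<Sum>j<N. K (u i) (u j) - K (v i) (v j))"
    by (simp add: V_def sum_subtractf scaleR_diff_right)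
  then have "norm (V u i - V v i) = (1 / real N) * norm (\<Sum>j<N. K (u i) (u j) - K (v i) (v j))"
    by simp
  also have "\<dots> \<le> (1 / real N) * (\<Sum>j<N. L * (norm (u i - v i) + norm (u j - v j)))"
    by (intro mult_left_mono order.trans[OF norm_sum] sum_mono K_lip) auto
  also have "\<dots> = (1 / real N) * (real N * (L * norm (u i - v i)) + L * (\<Sum>j<N. norm (u j - v j)))"
    by (simp add: sum.distrib sum_distrib_left algebra_simps)
  also have "\<dots> = L * norm (u i - v i) + (L / real N) * (\<Sum>j<N. norm (u j - v j))"
    using Npos by (simp add: field_simps)
  finally show ?thesis .
qed

lemma Dst_deriv:
  assumes "is_sol u" "is_sol v"
  shows "(Dst u v has_real_derivative (\<Sum>i<N. 2 * inner (u s i - v s i) (V (u s) i - V (v s) i))) (at s)"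
  unfolding Dst_def[abs_def]
proof (rule DERIV_sum)
  fix i assume "i \<in> {..<N}"
  then have "((\<lambda>s. u s i - v s i) has_vector_derivative (V (u s) i - V (v s) i)) (at s)"
    using assms unfolding is_sol_def by (intro has_vector_derivative_diff) auto
  then show "((\<lambda>s. (norm (u s i - v s i))\<^sup>2) has_real_derivative 2 * inner (u s i - v s i) (V (u s) i - V (v s) i)) (at s)"
    by (rule deriv_norm2)
qed

lemma Dst_deriv_bound:
  "\<bar>\<Sum>i<N. 2 * inner (u s i - v s i) (V (u s) i - V (v s) i)\<bar> \<le> 4 * L * Dst u v s"
proof -
  define a where "a i = norm (u s i - v s i)" for i
  define A where "A = (\<Sum>i<N. a i)"
  have a0: "a i \<ge> 0" for i by (simp add: a_def)
  have "\<bar>\<Sum>i<N. 2 * inner (u s i - v s i) (V (u s) i - V (v s) i)\<bar>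
      \<le> (\<Sum>i<N. 2 * (a i * (L * a i + (L / real N) * A)))"
  proof (rule order.trans[OF sum_abs], rule sum_mono)
    fix i
    have "\<bar>2 * inner (u s i - v s i) (V (u s) i - V (v s) i)\<bar> \<le> 2 * (a i * norm (V (u s) i - V (v s) i))"
      unfolding a_def using Cauchy_Schwarz_ineq2 by (simp add: abs_mult)
    also have "\<dots> \<le> 2 * (a i * (L * a i + (L / real N) * A))"
      unfolding A_def a_def by (intro mult_left_mono V_lip) auto
    finally show "\<bar>2 * inner (u s i - v s i) (V (u s) i - V (v s) i)\<bar> \<le> 2 * (a i * (L * a i + (L / real N) * A))" .
  qed
  also have "\<dots> = 2 * L * (\<Sum>i<N. (a i)\<^sup>2) + 2 * (L / real N) * A\<^sup>2"
    by (simp add: sum.distrib sum_distrib_left sum_distrib_right sum_divide_distrib A_def power2_eq_square algebra_simps)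
  also have "\<dots> \<le> 2 * L * (\<Sum>i<N. (a i)\<^sup>2) + 2 * (L / real N) * ((\<Sum>i<N. (a i)\<^sup>2) * real N)"
    using sum_squared_le_sum_of_squares[of a "{..<N}"] L_nonneg unfolding A_def
    by (intro add_left_mono mult_left_mono) auto
  also have "\<dots> = 4 * L * (\<Sum>i<N. (a i)\<^sup>2)"
    using Npos by (simp add: field_simps)
  finally show ?thesis by (simp add: Dst_def a_def)
qed

lemma Dst_nonneg: "Dst u v s \<ge> 0"
  by (simp add: Dst_def sum_nonneg)

lemma gronwall:
  assumes "is_sol u" "is_sol v"
  shows "Dst u v t \<le> Dst u v 0 * exp (4 * L * \<bar>t\<bar>)"
proof -
  define D' where "D' s = (\<Sum>i<N. 2 * inner (u s i - v s i) (V (u s) i - V (v s) i))" for s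
  have d: "(Dst u v has_real_derivative D' s) (at s)" for s
    unfolding D'_def by (rule Dst_deriv[OF assms])
  have b: "\<bar>D' s\<bar> \<le> 4 * L * Dst u v s" for s
    unfolding D'_def by (rule Dst_deriv_bound)
  show ?thesis
  proof (cases "t \<ge> 0")
    case True
    define E where "E s = Dst u v s * exp (- (4 * L) * s)" for s
    have "E t \<le> E 0"
    proof (rule DERIV_nonpos_imp_nonincreasing[OF True])
      fix x
      have "(E has_real_derivative D' x * exp (- (4 * L) * x) + Dst u v x * (exp (- (4 * L) * x) * (- (4 * L)))) (at x)"
        unfolding E_def[abs_def] by (auto intro!: derivative_eq_intros d)
      moreover have "D' x * exp (- (4 * L) * x) + Dst u v x * (exp (- (4 * L) * x) * (- (4 * L))) \<le> 0"
      proof -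
        have "D' x \<le> 4 * L * Dst u v x" using b[of x] by linarith
        then have "D' x * exp (- (4 * L) * x) \<le> (4 * L * Dst u v x) * exp (- (4 * L) * x)"
          by (intro mult_right_mono) auto
        then show ?thesis by (simp add: algebra_simps)
      qed
      ultimately show "\<exists>y. (E has_real_derivative y) (at x) \<and> y \<le> 0" by blast
    qed
    then have "Dst u v t * exp (- (4 * L) * t) \<le> Dst u v 0" by (simp add: E_def)
    then have "Dst u v t * exp (- (4 * L) * t) * exp (4 * L * t) \<le> Dst u v 0 * exp (4 * L * t)"
      by (intro mult_right_mono) auto
    then show ?thesis using True by (simp add: mult.assoc flip: exp_add)
  next
    case False
    define E where "E s = Dst u v s * exp ((4 * L) * s)" for s
    have "E t \<le> E 0"
    proof (rule DERIV_nonneg_imp_nondecreasing[of t 0 E])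
      show "t \<le> 0" using False by simp
      fix x
      have "(E has_real_derivative D' x * exp ((4 * L) * x) + Dst u v x * (exp ((4 * L) * x) * (4 * L))) (at x)"
        unfolding E_def[abs_def] by (auto intro!: derivative_eq_intros d)
      moreover have "D' x * exp ((4 * L) * x) + Dst u v x * (exp ((4 * L) * x) * (4 * L)) \<ge> 0"
      proof -
        have "D' x \<ge> - (4 * L * Dst u v x)" using b[of x] by linarith
        then have "D' x * exp ((4 * L) * x) \<ge> (- (4 * L * Dst u v x)) * exp ((4 * L) * x)"
          by (intro mult_right_mono) auto
        then show ?thesis by (simp add: algebra_simps)
      qed
      ultimately show "\<exists>y. (E has_real_derivative y) (at x) \<and> y \<ge> 0" by blast
    qed
    then have "Dst u v t * exp (4 * L * t) \<le> Dst u v 0" by (simp add: E_def)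
    then have "Dst u v t * exp (4 * L * t) * exp (- 4 * L * t) \<le> Dst u v 0 * exp (- 4 * L * t)"
      by (intro mult_right_mono) auto
    then show ?thesis using False by (simp add: mult.assoc flip: exp_add)
  qed
qed

end


lemma coord_tendsto: "((\<lambda>w::nat\<Rightarrow>'b::topological_space. w k) \<longlongrightarrow> x k) (at x within S)"
proof -
  have "((\<lambda>w::nat\<Rightarrow>'b. w) \<longlongrightarrow> x) (at x within S)" by (rule tendsto_ident_at)
  then show ?thesis unfolding tendsto_fun_iff by blast
qed

context ctx begin

abbreviation "SN \<equiv> space (cfg_space N :: (nat \<Rightarrow> 'a) measure)"

lemma flow0: "z \<in> SN \<Longrightarrow> T 0 z = z"
  using flow by (auto simp: is_flow_def)

lemma flow_space: "z \<in> SN \<Longrightarrow> T t z \<in> SN"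
  using flow by (auto simp: is_flow_def)

lemma flow_deriv: "z \<in> SN \<Longrightarrow> i < N \<Longrightarrow> ((\<lambda>s. T s z i) has_vector_derivative V (T t z) i) (at t)"
  unfolding V_def using flow by (auto simp: is_flow_def)

lemma flow_sol: "z \<in> SN \<Longrightarrow> is_sol (\<lambda>s. T s z)"
  unfolding is_sol_def using flow_deriv by blast

lemma S_ext: "z \<in> space (cfg_space n) \<Longrightarrow> w \<in> space (cfg_space n) \<Longrightarrow> (\<And>i. i < n \<Longrightarrow> z i = w i) \<Longrightarrow> z = w"
  by (auto simp: space_cfg PiE_iff extensional_def fun_eq_iff) (metis not_less)

lemma Dst_zero: "Dst u v t \<le> 0 \<Longrightarrow> i < N \<Longrightarrow> u t i = v t i"
proof -
  assume "Dst u v t \<le> 0" "i < N"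
  then have "Dst u v t = 0" using Dst_nonneg[of u v t] by linarith
  then have "\<forall>k\<in>{..<N}. (norm (u t k - v t k))\<^sup>2 = 0"
    unfolding Dst_def by (subst sum_nonneg_eq_0_iff[symmetric]) auto
  then show ?thesis using \<open>i < N\<close> by auto
qed

lemma T_perm:
  assumes p: "p permutes {..<N}" and z: "z \<in> SN"
  shows "T t (restrict (z \<circ> p) {..<N}) = restrict (T t z \<circ> p) {..<N}"
proof -
  define z' where "z' = restrict (z \<circ> p) {..<N}"
  have z'S: "z' \<in> SN" by (simp add: space_cfg z'_def)
  define u where "u s = restrict (T s z \<circ> p) {..<N}" for s
  have plt: "i < N \<Longrightarrow> p i < N" for i using permutes_in_image[OF p] by auto
  have us: "is_sol u"
    unfolding is_sol_def
  proof (intro allI impI)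
    fix i s assume i: "i < N"
    have e1: "(\<lambda>s. u s i) = (\<lambda>s. T s z (p i))" using i by (simp add: u_def fun_eq_iff)
    have "(\<Sum>j<N. K (T s z (p i)) (T s z j)) = (\<Sum>j<N. K (T s z (p i)) (T s z (p j)))"
      using sum.permute[OF p, of "\<lambda>j. K (T s z (p i)) (T s z j)"] by (simp add: o_def)
    also have "\<dots> = (\<Sum>j<N. K (u s i) (u s j))"
      using i by (intro sum.cong) (auto simp: u_def)
    finally have "V (T s z) (p i) = V (u s) i" unfolding V_def by simp
    then show "((\<lambda>s. u s i) has_vector_derivative V (u s) i) (at s)"
      unfolding e1 using flow_deriv[OF z plt[OF i], of s] by simp
  qed
  have "Dst (\<lambda>s. T s z') u t \<le> Dst (\<lambda>s. T s z') u 0 * exp (4 * L * \<bar>t\<bar>)"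
    by (rule gronwall[OF flow_sol[OF z'S] us])
  also have "Dst (\<lambda>s. T s z') u 0 = 0"
    unfolding Dst_def using flow0[OF z'S] flow0[OF z]
    by (intro sum.neutral) (auto simp: u_def z'_def)
  finally have "Dst (\<lambda>s. T s z') u t \<le> 0" by simp
  from Dst_zero[OF this] have "\<And>i. i < N \<Longrightarrow> T t z' i = u t i" .
  moreover have "u t \<in> SN" by (simp add: u_def space_cfg)
  ultimately show ?thesis unfolding z'_def[symmetric]
    using S_ext[OF flow_space[OF z'S]] by (simp add: u_def)
qed

lemma zero_sol: "is_sol (\<lambda>s. restrict (\<lambda>_. 0) {..<N})"
  unfolding is_sol_def V_def by (auto simp: K_diag)

lemma T_bound:
  assumes z: "z \<in> SN" and i: "i < N"
  shows "norm (T t z i) \<le> exp (2 * L * \<bar>t\<bar>) * (\<Sum>k<N. norm (z k))"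
proof -
  let ?v = "\<lambda>s::real. (restrict (\<lambda>_. 0) {..<N} :: nat \<Rightarrow> 'a)"
  have g: "Dst (\<lambda>s. T s z) ?v t \<le> Dst (\<lambda>s. T s z) ?v 0 * exp (4 * L * \<bar>t\<bar>)"
    by (rule gronwall[OF flow_sol[OF z] zero_sol])
  have "(norm (T t z i))\<^sup>2 \<le> (\<Sum>k<N. (norm (T t z k))\<^sup>2)"
    using i by (intro member_le_sum) auto
  also have "\<dots> = Dst (\<lambda>s. T s z) ?v t" by (simp add: Dst_def)
  also have "\<dots> \<le> Dst (\<lambda>s. T s z) ?v 0 * exp (4 * L * \<bar>t\<bar>)" by (rule g)
  also have "Dst (\<lambda>s. T s z) ?v 0 = (\<Sum>k<N. (norm (z k))\<^sup>2)" by (simp add: Dst_def flow0[OF z])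
  also have "(\<Sum>k<N. (norm (z k))\<^sup>2) \<le> (\<Sum>k<N. norm (z k))\<^sup>2"
    by (rule sum_sq_le_sq_sum) auto
  also have "exp (4 * L * \<bar>t\<bar>) = (exp (2 * L * \<bar>t\<bar>))\<^sup>2"
    by (simp add: power2_eq_square flip: exp_add)
  finally have "(norm (T t z i))\<^sup>2 \<le> (exp (2 * L * \<bar>t\<bar>) * (\<Sum>k<N. norm (z k)))\<^sup>2"
    by (simp add: power_mult_distrib mult.commute)
  then show ?thesis
    by (rule power2_le_imp_le) (auto intro!: sum_nonneg mult_nonneg_nonneg)
qed

lemma T_lip:
  assumes z: "z \<in> SN" and w: "w \<in> SN" and i: "i < N"
  shows "norm (T t w i - T t z i) \<le> exp (2 * L * \<bar>t\<bar>) * sqrt (\<Sum>k<N. (norm (w k - z k))\<^sup>2)"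
proof -
  have g: "Dst (\<lambda>s. T s w) (\<lambda>s. T s z) t \<le> Dst (\<lambda>s. T s w) (\<lambda>s. T s z) 0 * exp (4 * L * \<bar>t\<bar>)"
    by (rule gronwall[OF flow_sol[OF w] flow_sol[OF z]])
  have "(norm (T t w i - T t z i))\<^sup>2 \<le> (\<Sum>k<N. (norm (T t w k - T t z k))\<^sup>2)"
    using i by (intro member_le_sum) auto
  also have "\<dots> = Dst (\<lambda>s. T s w) (\<lambda>s. T s z) t" by (simp add: Dst_def)
  also have "\<dots> \<le> Dst (\<lambda>s. T s w) (\<lambda>s. T s z) 0 * exp (4 * L * \<bar>t\<bar>)" by (rule g)
  also have "Dst (\<lambda>s. T s w) (\<lambda>s. T s z) 0 = (\<Sum>k<N. (norm (w k - z k))\<^sup>2)"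
    by (simp add: Dst_def flow0[OF z] flow0[OF w])
  also have "exp (4 * L * \<bar>t\<bar>) = (exp (2 * L * \<bar>t\<bar>))\<^sup>2"
    by (simp add: power2_eq_square flip: exp_add)
  finally have "(norm (T t w i - T t z i))\<^sup>2 \<le> (exp (2 * L * \<bar>t\<bar>) * sqrt (\<Sum>k<N. (norm (w k - z k))\<^sup>2))\<^sup>2"
    by (simp add: power_mult_distrib mult.commute sum_nonneg)
  then show ?thesis
    by (rule power2_le_imp_le) (auto intro!: sum_nonneg mult_nonneg_nonneg)
qed

lemma T_cont: "continuous_on SN (\<lambda>z. T t z i)"
proof (cases "i < N")
  case True
  show ?thesis unfolding continuous_on_def
  proof
    fix x assume x: "x \<in> SN"
    have "((\<lambda>w. exp (2 * L * \<bar>t\<bar>) * sqrt (\<Sum>k<N. (norm (w k - x k))\<^sup>2)) \<longlongrightarrow>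
        exp (2 * L * \<bar>t\<bar>) * sqrt (\<Sum>k<N. (norm (x k - x k))\<^sup>2)) (at x within SN)"
      by (intro tendsto_intros coord_tendsto)
    then have lim0: "((\<lambda>w. exp (2 * L * \<bar>t\<bar>) * sqrt (\<Sum>k<N. (norm (w k - x k))\<^sup>2)) \<longlongrightarrow> 0) (at x within SN)"
      by simp
    have "\<forall>\<^sub>F w in at x within SN. norm (T t w i - T t x i) \<le> exp (2 * L * \<bar>t\<bar>) * sqrt (\<Sum>k<N. (norm (w k - x k))\<^sup>2)"
      unfolding eventually_at_filter using T_lip[OF x _ True] by (auto intro!: always_eventually)
    from Lim_null_comparison[OF this lim0]
    show "((\<lambda>z. T t z i) \<longlongrightarrow> T t x i) (at x within SN)"
      by (rule LIM_zero_cancel)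
  qed
next
  case False
  have "continuous_on SN (\<lambda>z. undefined :: 'a)" by simp
  then show ?thesis
    by (rule continuous_on_cong[THEN iffD1, rotated 2]) (use flow_space False in \<open>auto simp: space_cfg PiE_iff extensional_def\<close>)
qed

lemma T_meas: "T t \<in> measurable (cfg_space N) (cfg_space N)"
proof -
  have "(\<lambda>z. \<lambda>i\<in>{..<N}. T t z i) \<in> measurable (cfg_space N) (PiM {..<N} (\<lambda>_. borel))"
    by (rule measurable_restrict) (rule cont_meas_cfg[OF T_cont])
  then have "(\<lambda>z. \<lambda>i\<in>{..<N}. T t z i) \<in> measurable (cfg_space N) (cfg_space N)"
    by (simp add: cfg_space_def)
  then show ?thesis
    by (rule measurable_cong[THEN iffD1, rotated]) (metis PiE_restrict flow_space space_cfg)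
qed

end


lemma vdq:
  fixes f :: "real \<Rightarrow> 'b::real_normed_vector"
  assumes "(f has_vector_derivative f') (at t)"
  shows "((\<lambda>s. (f s - f t) /\<^sub>R (s - t)) \<longlongrightarrow> f') (at t)"
proof -
  have lim0: "((\<lambda>y. norm (f y - f t - (y - t) *\<^sub>R f') / norm (y - t)) \<longlongrightarrow> 0) (at t)"
    using assms unfolding has_vector_derivative_def has_derivative_iff_norm by blast
  have ev: "\<forall>\<^sub>F y in at t. y \<noteq> t" by (simp add: eventually_at_filter)
  have eqf: "\<forall>\<^sub>F y in at t. norm (f y - f t - (y - t) *\<^sub>R f') / norm (y - t) = norm ((f y - f t) /\<^sub>R (y - t) - f')"
  using ev proof eventually_elim
    case (elim y)
    then have "y \<noteq> t" by simp
    then have ne: "y - t \<noteq> 0" by simp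
    have "(1 / (y - t)) *\<^sub>R (f y - f t - (y - t) *\<^sub>R f') = (1/(y-t)) *\<^sub>R (f y - f t) - ((1/(y-t)) * (y - t)) *\<^sub>R f'"
      by (simp add: scaleR_diff_right)
    also have "\<dots> = (f y - f t) /\<^sub>R (y - t) - f'" using ne by (simp add: divide_inverse)
    finally have "(f y - f t) /\<^sub>R (y - t) - f' = (1 / (y - t)) *\<^sub>R (f y - f t - (y - t) *\<^sub>R f')" by simp
    then show "norm (f y - f t - (y - t) *\<^sub>R f') / norm (y - t) = norm ((f y - f t) /\<^sub>R (y - t) - f')"
      by (simp add: divide_simps)
  qed
  have "((\<lambda>y. norm ((f y - f t) /\<^sub>R (y - t) - f')) \<longlongrightarrow> 0) (at t)"
    by (rule Lim_transform_eventually[OF lim0 eqf])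
  then have "((\<lambda>y. (f y - f t) /\<^sub>R (y - t) - f') \<longlongrightarrow> 0) (at t)"
    by (rule tendsto_norm_zero_cancel)
  then show ?thesis by (rule LIM_zero_cancel)
qed

lemma pder_has_deriv:
  assumes C: "C1b j \<phi>" and y: "y \<in> space (cfg_space j)" and l: "l < j"
  shows "((\<lambda>x. \<phi> (y(l := x))) has_derivative pder \<phi> y l) (at (y l))"
proof -
  have "(\<lambda>x. \<phi> (y(l := x))) differentiable (at (y l))"
    using C y l unfolding C1b_def by blast
  then show ?thesis unfolding frechet_derivative_works pder_def by (simp add: fun_eq_iff)
qed

lemma pder_linear:
  assumes C: "C1b j \<phi>" and y: "y \<in> space (cfg_space j)" and l: "l < j"
  shows "linear (pder \<phi> y l)"
  using has_derivative_linear[OF pder_has_deriv[OF assms]] .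

lemma pder_basis:
  assumes C: "C1b j \<phi>" and y: "y \<in> space (cfg_space j)" and l: "l < j"
  shows "pder \<phi> y l v = (\<Sum>b\<in>Basis. (v \<bullet> b) * pder \<phi> y l b)"
proof -
  have lin: "linear (pder \<phi> y l)" by (rule pder_linear[OF assms])
  have "pder \<phi> y l v = pder \<phi> y l (\<Sum>b\<in>Basis. (v \<bullet> b) *\<^sub>R b)"
    by (simp add: euclidean_representation)
  also have "\<dots> = (\<Sum>b\<in>Basis. (v \<bullet> b) * pder \<phi> y l b)"
    using lin by (simp add: linear_sum linear_cmul o_def)
  finally show ?thesis .
qed

lemma pder_tendsto:
  assumes C: "C1b j \<phi>" and l: "l < j"
    and xi: "(\<xi> \<longlongrightarrow> y) F" and y: "y \<in> space (cfg_space j)"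
    and ev: "\<forall>\<^sub>F s in F. \<xi> s \<in> space (cfg_space j)"
    and v: "(v \<longlongrightarrow> v0) F"
  shows "((\<lambda>s. pder \<phi> (\<xi> s) l (v s)) \<longlongrightarrow> pder \<phi> y l v0) F"
proof -
  have c: "continuous_on (space (cfg_space j)) (\<lambda>z. pder \<phi> z l b)" for b
    using C l unfolding C1b_def by blast
  have "((\<lambda>s. \<Sum>b\<in>Basis. (v s \<bullet> b) * pder \<phi> (\<xi> s) l b) \<longlongrightarrow> (\<Sum>b\<in>Basis. (v0 \<bullet> b) * pder \<phi> y l b)) F"
    by (intro tendsto_intros v continuous_on_tendsto_compose[OF c xi y ev])
  moreover have "\<forall>\<^sub>F s in F. (\<Sum>b\<in>Basis. (v s \<bullet> b) * pder \<phi> (\<xi> s) l b) = pder \<phi> (\<xi> s) l (v s)"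
    using ev by eventually_elim (simp add: pder_basis[OF C _ l])
  ultimately show ?thesis
    unfolding pder_basis[OF C y l, of v0] by (rule Lim_transform_eventually)
qed

lemma chain:
  assumes C: "C1b j \<phi>" and \<gamma>S: "\<And>s. \<gamma> s \<in> space (cfg_space j)"
    and \<gamma>d: "\<And>l. l < j \<Longrightarrow> ((\<lambda>s. \<gamma> s l) has_vector_derivative \<gamma>' l) (at t)"
  shows "((\<lambda>s. \<phi> (\<gamma> s)) has_real_derivative (\<Sum>l<j. pder \<phi> (\<gamma> t) l (\<gamma>' l))) (at t)"
proof -
  define H where "H l s = (\<lambda>i. if i < l then \<gamma> s i else \<gamma> t i)" for l s
  have und: "i \<ge> j \<Longrightarrow> \<gamma> s i = undefined" for s i
    using \<gamma>S[of s] by (auto simp: space_cfg PiE_iff extensional_def)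
  have HS: "H l s \<in> space (cfg_space j)" for l s
    using und by (auto simp: H_def space_cfg PiE_iff extensional_def)
  have H0: "H 0 s = \<gamma> t" for s by (simp add: H_def)
  have Hj: "H j s = \<gamma> s" for s
    using und by (auto simp: H_def fun_eq_iff not_less)
  have HSuc: "H (Suc l) s = (H l s)(l := \<gamma> s l)" for l s by (auto simp: H_def fun_eq_iff)
  have Hl: "H l s l = \<gamma> t l" for l s by (simp add: H_def)
  have tele: "\<phi> (\<gamma> s) - \<phi> (\<gamma> t) = (\<Sum>l<j. \<phi> (H (Suc l) s) - \<phi> (H l s))" for s
    by (subst sum_lessThan_telescope) (simp add: H0 Hj)
  define P where "P l s \<tau> \<longleftrightarrow> 0 < \<tau> \<and> \<tau> < 1 \<and> \<phi> (H (Suc l) s) - \<phi> (H l s) =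
      pder \<phi> ((H l s)(l := \<gamma> t l + \<tau> *\<^sub>R (\<gamma> s l - \<gamma> t l))) l (\<gamma> s l - \<gamma> t l)" for l s \<tau>
  have ex: "\<exists>\<tau>. P l s \<tau>" if l: "l < j" for l s
  proof -
    let ?y = "H l s"
    let ?D = "\<gamma> s l - \<gamma> t l"
    define g where "g \<tau> = \<phi> (?y(l := \<gamma> t l + \<tau> *\<^sub>R ?D))" for \<tau>
    have gd: "(g has_real_derivative pder \<phi> (?y(l := \<gamma> t l + \<tau> *\<^sub>R ?D)) l ?D) (at \<tau>)" for \<tau>
    proof -
      let ?z = "?y(l := \<gamma> t l + \<tau> *\<^sub>R ?D)"
      have zS: "?z \<in> space (cfg_space j)"
        using HS[of l s] l by (auto simp: space_cfg PiE_iff extensional_def)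
      have h1: "((\<lambda>x. \<phi> (?z(l := x))) has_derivative pder \<phi> ?z l) (at (?z l))"
        by (rule pder_has_deriv[OF C zS l])
      have h2: "((\<lambda>\<tau>. \<gamma> t l + \<tau> *\<^sub>R ?D) has_derivative (\<lambda>h. h *\<^sub>R ?D)) (at \<tau>)"
        by (auto intro!: derivative_eq_intros)
      have h1': "((\<lambda>x. \<phi> (?y(l := x))) has_derivative pder \<phi> ?z l) (at (\<gamma> t l + \<tau> *\<^sub>R ?D))"
        using h1 by simp
      have "((\<lambda>x. \<phi> (?y(l := x))) \<circ> (\<lambda>\<tau>. \<gamma> t l + \<tau> *\<^sub>R ?D) has_derivative pder \<phi> ?z l \<circ> (\<lambda>h. h *\<^sub>R ?D)) (at \<tau>)"
        by (rule diff_chain_at[OF h2 h1'])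
      moreover have "pder \<phi> ?z l \<circ> (\<lambda>h. h *\<^sub>R ?D) = (\<lambda>h. pder \<phi> ?z l ?D * h)"
        using pder_linear[OF C zS l] by (simp add: fun_eq_iff linear_cmul)
      moreover have "(\<lambda>x. \<phi> (?y(l := x))) \<circ> (\<lambda>\<tau>. \<gamma> t l + \<tau> *\<^sub>R ?D) = g"
        by (simp add: g_def fun_eq_iff o_def)
      ultimately show ?thesis unfolding has_field_derivative_def by simp
    qed
    obtain \<tau> where "0 < \<tau>" "\<tau> < 1" "g 1 - g 0 = (1 - 0) * pder \<phi> (?y(l := \<gamma> t l + \<tau> *\<^sub>R ?D)) l ?D"
      using MVT2[of 0 1 g, OF _ gd] by auto
    moreover have "g 1 = \<phi> (H (Suc l) s)" by (simp add: g_def HSuc)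
    moreover have "g 0 = \<phi> (H l s)" by (simp add: g_def, metis Hl fun_upd_triv)
    ultimately show ?thesis unfolding P_def by auto
  qed
  define \<tau> where "\<tau> l s = (SOME \<tau>. P l s \<tau>)" for l s
  have P\<tau>: "l < j \<Longrightarrow> P l s (\<tau> l s)" for l s
    unfolding \<tau>_def by (rule someI_ex, rule ex)
  define \<xi> where "\<xi> l s = (H l s)(l := \<gamma> t l + \<tau> l s *\<^sub>R (\<gamma> s l - \<gamma> t l))" for l s
  have \<xi>S: "l < j \<Longrightarrow> \<xi> l s \<in> space (cfg_space j)" for l s
    using HS[of l s] by (auto simp: \<xi>_def space_cfg PiE_iff extensional_def)
  have \<gamma>c: "((\<lambda>s. \<gamma> s i) \<longlongrightarrow> \<gamma> t i) (at t)" for i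
  proof (cases "i < j")
    case True
    then show ?thesis using has_vector_derivative_continuous[OF \<gamma>d[OF True]]
      by (simp add: continuous_within)
  next
    case False then show ?thesis using und by simp
  qed
  have \<xi>lim: "((\<lambda>s. \<xi> l s) \<longlongrightarrow> \<gamma> t) (at t)" if l: "l < j" for l
    unfolding tendsto_fun_iff
  proof
    fix i
    show "((\<lambda>s. \<xi> l s i) \<longlongrightarrow> \<gamma> t i) (at t)"
    proof (cases "i = l")
      case True
      have d0: "((\<lambda>s. \<gamma> s l - \<gamma> t l) \<longlongrightarrow> 0) (at t)"
        using \<gamma>c[of l] by (rule LIM_zero)
      have "\<forall>\<^sub>F s in at t. norm (\<tau> l s *\<^sub>R (\<gamma> s l - \<gamma> t l)) \<le> norm (\<gamma> s l - \<gamma> t l)"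
      proof (rule always_eventually, rule allI)
        fix s
        have "0 < \<tau> l s" "\<tau> l s < 1" using P\<tau>[OF l, of s] unfolding P_def by auto
        then show "norm (\<tau> l s *\<^sub>R (\<gamma> s l - \<gamma> t l)) \<le> norm (\<gamma> s l - \<gamma> t l)"
          by (simp add: mult_left_le_one_le)
      qed
      from Lim_null_comparison[OF this tendsto_norm_zero[OF d0]]
      have "((\<lambda>s. \<tau> l s *\<^sub>R (\<gamma> s l - \<gamma> t l)) \<longlongrightarrow> 0) (at t)" .
      then have "((\<lambda>s. \<gamma> t l + \<tau> l s *\<^sub>R (\<gamma> s l - \<gamma> t l)) \<longlongrightarrow> \<gamma> t l + 0) (at t)"
        by (intro tendsto_intros)
      then show ?thesis using True by (simp add: \<xi>_def)
    next
      case False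
      then show ?thesis
        by (cases "i < l") (auto simp: \<xi>_def H_def \<gamma>c)
    qed
  qed
  have lim: "((\<lambda>s. \<Sum>l<j. pder \<phi> (\<xi> l s) l ((\<gamma> s l - \<gamma> t l) /\<^sub>R (s - t))) \<longlongrightarrow>
      (\<Sum>l<j. pder \<phi> (\<gamma> t) l (\<gamma>' l))) (at t)"
    by (intro tendsto_sum pder_tendsto[OF C] \<xi>lim \<gamma>S always_eventually allI \<xi>S vdq \<gamma>d) auto
  have eq: "\<forall>\<^sub>F s in at t. (\<Sum>l<j. pder \<phi> (\<xi> l s) l ((\<gamma> s l - \<gamma> t l) /\<^sub>R (s - t))) =
      (\<phi> (\<gamma> s) - \<phi> (\<gamma> t)) / (s - t)"
  proof (rule always_eventually, rule allI)
    fix s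
    have "(\<Sum>l<j. pder \<phi> (\<xi> l s) l ((\<gamma> s l - \<gamma> t l) /\<^sub>R (s - t))) =
        (\<Sum>l<j. pder \<phi> (\<xi> l s) l (\<gamma> s l - \<gamma> t l) / (s - t))"
      using pder_linear[OF C \<xi>S] by (intro sum.cong) (auto simp: linear_cmul divide_inverse_commute)
    also have "\<dots> = (\<Sum>l<j. \<phi> (H (Suc l) s) - \<phi> (H l s)) / (s - t)"
      using P\<tau> by (simp add: sum_divide_distrib P_def \<xi>_def)
    finally show "(\<Sum>l<j. pder \<phi> (\<xi> l s) l ((\<gamma> s l - \<gamma> t l) /\<^sub>R (s - t))) = (\<phi> (\<gamma> s) - \<phi> (\<gamma> t)) / (s - t)"
      by (simp add: tele)
  qed
  show ?thesis unfolding has_field_derivative_iff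
    by (rule Lim_transform_eventually[OF lim eq])
qed



lemma deriv_integral:
  fixes F F' :: "real \<Rightarrow> 'b \<Rightarrow> real" and g :: "'b \<Rightarrow> real"
  assumes Fm: "\<And>s. F s \<in> borel_measurable M"
    and F'm: "F' t \<in> borel_measurable M"
    and Fi: "\<And>s. integrable M (F s)"
    and gi: "integrable M g"
    and d: "\<And>x s. x \<in> space M \<Longrightarrow> ((\<lambda>s. F s x) has_real_derivative F' s x) (at s)"
    and bnd: "\<And>x s. x \<in> space M \<Longrightarrow> s \<in> {t-1..t+1} \<Longrightarrow> \<bar>F' s x\<bar> \<le> g x"
  shows "((\<lambda>s. \<integral>x. F s x \<partial>M) has_real_derivative (\<integral>x. F' t x \<partial>M)) (at t)"
proof -
  define Q where "Q s x = (F s x - F t x) / (s - t)" for s x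
  have Qbound: "\<bar>Q s x\<bar> \<le> g x" if x: "x \<in> space M" and s1: "\<bar>s - t\<bar> \<le> 1" and st: "s \<noteq> t" for s x
  proof (cases "t < s")
    case True
    obtain z where z: "t < z" "z < s" "F s x - F t x = (s - t) * F' z x"
      using MVT2[of t s "\<lambda>s. F s x" "\<lambda>s. F' s x", OF True d[OF x]] by auto
    have "Q s x = F' z x" using z True by (simp add: Q_def)
    moreover have "z \<in> {t-1..t+1}" using z s1 by auto
    ultimately show ?thesis using bnd[OF x] by simp
  next
    case False
    then have ts: "s < t" using st by simp
    obtain z where z: "s < z" "z < t" "F t x - F s x = (t - s) * F' z x"
      using MVT2[of s t "\<lambda>s. F s x" "\<lambda>s. F' s x", OF ts d[OF x]] by auto
    have "Q s x = F' z x" using z ts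
      by (simp add: Q_def) (metis (no_types, opaque_lifting) minus_diff_eq nonzero_mult_div_cancel_left mult_minus_left neg_equal_0_iff_equal right_minus_eq ts less_irrefl minus_divide_divide)
    moreover have "z \<in> {t-1..t+1}" using z s1 by auto
    ultimately show ?thesis using bnd[OF x] by simp
  qed
  have Qlim: "((\<lambda>s. Q s x) \<longlongrightarrow> F' t x) (at t)" if x: "x \<in> space M" for x
    using d[OF x, of t] unfolding has_field_derivative_iff Q_def by simp
  have Qm: "Q s \<in> borel_measurable M" for s
    unfolding Q_def[abs_def] using Fm by measurable
  have eq: "((\<integral>x. F s x \<partial>M) - (\<integral>x. F t x \<partial>M)) / (s - t) = (\<integral>x. Q s x \<partial>M)" for s
    unfolding Q_def by (simp add: Bochner_Integration.integral_diff[OF Fi Fi] integral_divide_zero)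
  show ?thesis
    unfolding has_field_derivative_iff tendsto_at_iff_sequentially
  proof (intro allI impI)
    fix X :: "nat \<Rightarrow> real"
    assume X: "\<forall>i. X i \<in> UNIV - {t}" and Xt: "X \<longlonglongrightarrow> t"
    from tendstoD[OF Xt, of 1] obtain n0 where n0: "\<And>n. n \<ge> n0 \<Longrightarrow> dist (X n) t < 1"
      by (auto simp: eventually_sequentially)
    have "(\<lambda>n. \<integral>x. Q (X (n + n0)) x \<partial>M) \<longlonglongrightarrow> (\<integral>x. F' t x \<partial>M)"
    proof (rule integral_dominated_convergence[where w=g])
      show "F' t \<in> borel_measurable M" by (rule F'm)
      show "(\<lambda>x. Q (X (n + n0)) x) \<in> borel_measurable M" for n using Qm by simp
      show "integrable M g" by (rule gi)
      show "AE x in M. (\<lambda>n. Q (X (n + n0)) x) \<longlonglongrightarrow> F' t x"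
      proof (rule AE_I2)
        fix x assume x: "x \<in> space M"
        have "((\<lambda>s. Q s x) \<circ> X) \<longlonglongrightarrow> F' t x"
          using Qlim[OF x] X Xt unfolding tendsto_at_iff_sequentially by blast
        then show "(\<lambda>n. Q (X (n + n0)) x) \<longlonglongrightarrow> F' t x"
          using LIMSEQ_ignore_initial_segment[where k=n0] by (simp add: o_def)
      qed
      show "AE x in M. norm (Q (X (n + n0)) x) \<le> g x" for n
      proof (rule AE_I2)
        fix x assume x: "x \<in> space M"
        have "\<bar>X (n + n0) - t\<bar> \<le> 1" using n0[of "n + n0"] by (simp add: dist_real_def)
        moreover have "X (n + n0) \<noteq> t" using X by auto
        ultimately show "norm (Q (X (n + n0)) x) \<le> g x" using Qbound[OF x] by simp
      qed
    qed
    then have "(\<lambda>n. \<integral>x. Q (X n) x \<partial>M) \<longlonglongrightarrow> (\<integral>x. F' t x \<partial>M)"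
      by (rule LIMSEQ_offset)
    then show "((\<lambda>y. ((\<integral>x. F y x \<partial>M) - (\<integral>x. F t x \<partial>M)) / (y - t)) \<circ> X) \<longlonglongrightarrow> (\<integral>x. F' t x \<partial>M)"
      by (simp add: o_def eq)
  qed
qed



lemma coord_meas: "(\<lambda>z. z a) \<in> borel_measurable (cfg_space n :: (nat \<Rightarrow> 'a::euclidean_space) measure)"
  by (rule measurable_product_then_coordinatewise[OF id_meas_cfg])

lemma pder_meas:
  assumes C: "C1b j \<phi>" and l: "l < j"
    and w: "w \<in> measurable M (cfg_space j)" and v: "v \<in> borel_measurable M"
  shows "(\<lambda>x. pder \<phi> (w x) l (v x)) \<in> borel_measurable M"
proof -
  have c: "(\<lambda>z. pder \<phi> z l b) \<in> borel_measurable (cfg_space j)" for b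
    using C l unfolding C1b_def by (intro cont_meas_cfg) blast
  have "(\<lambda>x. \<Sum>b\<in>Basis. (v x \<bullet> b) * pder \<phi> (w x) l b) \<in> borel_measurable M"
    using measurable_compose[OF w c] v by measurable
  then show ?thesis
    by (rule measurable_cong[THEN iffD1, rotated]) (simp add: pder_basis[OF C measurable_space[OF w] l])
qed

lemma phi_meas: "C1b j \<phi> \<Longrightarrow> \<phi> \<in> borel_measurable (cfg_space j)"
  unfolding C1b_def by (intro cont_meas_cfg) blast

lemma R_meas: "j \<le> n \<Longrightarrow> (\<lambda>z. restrict z {..<j}) \<in> measurable (cfg_space n) (cfg_space j)"
  unfolding cfg_space_def by (rule measurable_restrict_subset) auto

locale ctxF = ctx K N L T for K :: "'a::euclidean_space \<Rightarrow> 'a \<Rightarrow> 'a" and N L T +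
  fixes Fin :: "(nat \<Rightarrow> 'a) measure"
  assumes Fin_sets: "sets Fin = sets (cfg_space N)"
    and Fin_prob: "prob_space Fin"
    and Fin_sym: "symmetric_measure N Fin"
    and Fin_moment: "integrable Fin (\<lambda>z. \<Sum>i<N. norm (z i))"
begin

lemma meas_Fin: "measurable Fin X = measurable (cfg_space N) X"
  by (rule measurable_cong_sets[OF Fin_sets refl])

lemma space_Fin: "space Fin = SN"
  by (rule sets_eq_imp_space_eq[OF Fin_sets])

lemma Tm: "T t \<in> measurable Fin (cfg_space N)"
  unfolding meas_Fin by (rule T_meas)

lemma Tc_meas: "(\<lambda>z. T t z a) \<in> borel_measurable Fin"
  using measurable_compose[OF Tm coord_meas] .

lemma K_meas:
  assumes "f \<in> borel_measurable M" "g \<in> borel_measurable M"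
  shows "(\<lambda>x. K (f x) (g x)) \<in> borel_measurable M"
  by (rule borel_measurable_continuous_Pair[OF assms K_cont_joint])

lemma int_marg:
  fixes g :: "(nat \<Rightarrow> 'a) \<Rightarrow> real"
  assumes g: "g \<in> borel_measurable (cfg_space j)" and j: "j \<le> N"
  shows "(\<integral>z. g z \<partial>(marg (distr Fin (cfg_space N) (T s)) j)) = (\<integral>z. g (restrict (T s z) {..<j}) \<partial>Fin)"
proof -
  have "(\<integral>z. g z \<partial>(marg (distr Fin (cfg_space N) (T s)) j)) =
      (\<integral>z. g (restrict z {..<j}) \<partial>(distr Fin (cfg_space N) (T s)))"
    unfolding marg_def
    by (rule integral_distr[OF _ g]) (simp add: measurable_distr_eq1 R_meas[OF j])
  also have "\<dots> = (\<integral>z. g (restrict (T s z) {..<j}) \<partial>Fin)"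
    by (rule integral_distr[OF Tm]) (rule measurable_compose[OF R_meas[OF j] g])
  finally show ?thesis .
qed

abbreviation "Mo z \<equiv> (\<Sum>i<N. norm (z i))"

lemma Mo_nonneg: "Mo z \<ge> 0" by (simp add: sum_nonneg)

lemma K_T_bound:
  assumes z: "z \<in> SN" and a: "a < N" and b: "b < N"
  shows "norm (K (T s z a) (T s z b)) \<le> 2 * L * exp (2 * L * \<bar>s\<bar>) * Mo z"
proof -
  have "norm (K (T s z a) (T s z b)) \<le> L * (norm (T s z a) + norm (T s z b))" by (rule K_bound)
  also have "\<dots> \<le> L * (exp (2 * L * \<bar>s\<bar>) * Mo z + exp (2 * L * \<bar>s\<bar>) * Mo z)"
    by (intro mult_left_mono add_mono T_bound z a b L_nonneg)
  finally show ?thesis by (simp add: algebra_simps)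
qed

lemma V_T_bound:
  assumes z: "z \<in> SN" and l: "l < N"
  shows "norm (V (T s z) l) \<le> 2 * L * exp (2 * L * \<bar>s\<bar>) * Mo z"
proof -
  have "norm (V (T s z) l) = (1 / real N) * norm (\<Sum>k<N. K (T s z l) (T s z k))"
    by (simp add: V_def)
  also have "\<dots> \<le> (1 / real N) * (\<Sum>k<N. 2 * L * exp (2 * L * \<bar>s\<bar>) * Mo z)"
    by (intro mult_left_mono order.trans[OF norm_sum] sum_mono K_T_bound z l) auto
  also have "\<dots> = 2 * L * exp (2 * L * \<bar>s\<bar>) * Mo z"
    using Npos by simp
  finally show ?thesis .
qed

lemma exp_mono_t: "\<bar>s\<bar> \<le> \<bar>t\<bar> + 1 \<Longrightarrow> exp (2 * L * \<bar>s\<bar>) \<le> exp (2 * L * (\<bar>t\<bar> + 1))"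
  using L_nonneg by (simp add: mult_left_mono)

end


context ctxF begin

lemma sym_swap:
  assumes C: "C1b j \<phi>" and l: "l < j" and jk: "j \<le> k" "k < N"
  shows "(\<integral>z. pder \<phi> (restrict (T t z) {..<j}) l (K (T t z l) (T t z k)) \<partial>Fin) =
         (\<integral>z. pder \<phi> (restrict (T t z) {..<j}) l (K (T t z l) (T t z j)) \<partial>Fin)"
proof -
  define p where "p = Transposition.transpose j k"
  have p: "p permutes {..<N}" unfolding p_def using jk by (intro permutes_swap_id) auto
  define P where "P z = restrict (z \<circ> p) {..<N}" for z :: "nat \<Rightarrow> 'a"
  have Pm: "P \<in> measurable (cfg_space N) (cfg_space N)"
  proof -
    have "(\<lambda>z. \<lambda>i\<in>{..<N}. z (p i)) \<in> measurable (cfg_space N) (PiM {..<N} (\<lambda>_. borel))"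
      by (rule measurable_restrict) (rule coord_meas)
    then show ?thesis by (simp add: P_def[abs_def] cfg_space_def o_def)
  qed
  have symm: "distr Fin (cfg_space N) P = Fin"
    using Fin_sym p unfolding symmetric_measure_def P_def by blast
  define H where "H z = pder \<phi> (restrict (T t z) {..<j}) l (K (T t z l) (T t z j))" for z
  have jN: "j \<le> N" using jk by simp
  have Hm: "H \<in> borel_measurable (cfg_space N)"
    unfolding H_def
    by (intro pder_meas[OF C l] measurable_compose[OF T_meas R_meas[OF jN]] K_meas
        measurable_compose[OF T_meas coord_meas])
  have "(\<integral>z. H z \<partial>Fin) = (\<integral>z. H z \<partial>(distr Fin (cfg_space N) P))" by (simp add: symm)
  also have "\<dots> = (\<integral>z. H (P z) \<partial>Fin)"
    by (rule integral_distr[OF _ Hm]) (simp add: meas_Fin Pm)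
  also have "\<dots> = (\<integral>z. pder \<phi> (restrict (T t z) {..<j}) l (K (T t z l) (T t z k)) \<partial>Fin)"
  proof (rule Bochner_Integration.integral_cong[OF refl])
    fix z assume "z \<in> space Fin"
    then have z: "z \<in> SN" by (simp add: space_Fin)
    have TP: "T t (P z) = restrict (T t z \<circ> p) {..<N}" unfolding P_def by (rule T_perm[OF p z])
    have pi: "i < j \<Longrightarrow> p i = i" for i using jk by (auto simp: p_def Transposition.transpose_def)
    have "restrict (T t (P z)) {..<j} = restrict (T t z) {..<j}"
      using jk pi by (auto simp: TP restrict_def fun_eq_iff)
    moreover have "T t (P z) l = T t z l" using l jk pi by (simp add: TP)
    moreover have "T t (P z) j = T t z k" using jk by (simp add: TP p_def)
    ultimately show "H (P z) = pder \<phi> (restrict (T t z) {..<j}) l (K (T t z l) (T t z k))"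
      by (simp add: H_def)
  qed
  finally show ?thesis by (simp add: H_def)
qed

end


context ctxF begin

lemma pder_B:
  assumes C: "C1b j \<phi>"
  obtains B where "B \<ge> 0" "\<And>l z v. l < j \<Longrightarrow> z \<in> space (cfg_space j) \<Longrightarrow> \<bar>pder \<phi> z l v\<bar> \<le> B * norm v"
proof -
  obtain B where B: "\<forall>l<j. \<forall>z\<in>space (cfg_space j). \<forall>v. \<bar>pder \<phi> z l v\<bar> \<le> B * norm v"
    using C unfolding C1b_def by blast
  have "\<bar>pder \<phi> z l v\<bar> \<le> \<bar>B\<bar> * norm v" if "l < j" "z \<in> space (cfg_space j)" for l z v
    using B that by (meson abs_ge_self mult_right_mono norm_ge_zero order_trans)
  then show ?thesis using that[of "\<bar>B\<bar>"] by auto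
qed

lemma main_deriv:
  assumes C: "C1b j \<phi>" and j: "1 \<le> j" "j \<le> N"
  shows "((\<lambda>s. \<integral>z. \<phi> z \<partial>(marg (distr Fin (cfg_space N) (T s)) j)) has_real_derivative
          (\<integral>z. (\<Sum>l<j. pder \<phi> (restrict (T t z) {..<j}) l (V (T t z) l)) \<partial>Fin)) (at t)"
proof -
  have \<phi>m: "\<phi> \<in> borel_measurable (cfg_space j)" by (rule phi_meas[OF C])
  have eqf: "(\<lambda>s. \<integral>z. \<phi> z \<partial>(marg (distr Fin (cfg_space N) (T s)) j)) = (\<lambda>s. \<integral>z. \<phi> (restrict (T s z) {..<j}) \<partial>Fin)"
    by (simp add: int_marg[OF \<phi>m j(2)])
  obtain B where B0: "B \<ge> 0" and B: "\<And>l z v. l < j \<Longrightarrow> z \<in> space (cfg_space j) \<Longrightarrow> \<bar>pder \<phi> z l v\<bar> \<le> B * norm v"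
    using pder_B[OF C] by blast
  have bd: "bounded (\<phi> ` space (cfg_space j))" using C by (simp add: C1b_def)
  then obtain B\<phi> where B\<phi>': "\<forall>x\<in>\<phi> ` space (cfg_space j). norm x \<le> B\<phi>"
    unfolding bounded_iff by blast
  then have B\<phi>: "\<And>z. z \<in> space (cfg_space j) \<Longrightarrow> norm (\<phi> z) \<le> B\<phi>" by blast
  define c where "c = real j * B * (2 * L * exp (2 * L * (\<bar>t\<bar> + 1)))"
  interpret P: prob_space Fin by (rule Fin_prob)
  have RT: "(\<lambda>z. restrict (T s z) {..<j}) \<in> measurable Fin (cfg_space j)" for s
    by (rule measurable_compose[OF Tm R_meas[OF j(2)]])
  have Vm: "(\<lambda>z. V (T s z) l) \<in> borel_measurable Fin" for s l
    unfolding V_def by (intro borel_measurable_scaleR borel_measurable_const borel_measurable_sum K_meas Tc_meas)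
  have "((\<lambda>s. \<integral>z. \<phi> (restrict (T s z) {..<j}) \<partial>Fin) has_real_derivative
          (\<integral>z. (\<Sum>l<j. pder \<phi> (restrict (T t z) {..<j}) l (V (T t z) l)) \<partial>Fin)) (at t)"
  proof (rule deriv_integral[where g = "\<lambda>z. c * Mo z"])
    show "(\<lambda>z. \<phi> (restrict (T s z) {..<j})) \<in> borel_measurable Fin" for s
      by (rule measurable_compose[OF RT \<phi>m])
    show "(\<lambda>z. \<Sum>l<j. pder \<phi> (restrict (T t z) {..<j}) l (V (T t z) l)) \<in> borel_measurable Fin"
      by (intro borel_measurable_sum pder_meas[OF C] RT Vm) auto
    show "integrable Fin (\<lambda>z. \<phi> (restrict (T s z) {..<j}))" for s
    proof (rule P.integrable_const_bound[where B=B\<phi>])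
      show "AE x in Fin. norm (\<phi> (restrict (T s x) {..<j})) \<le> B\<phi>"
        by (intro AE_I2 B\<phi>) (simp add: space_cfg)
      show "(\<lambda>z. \<phi> (restrict (T s z) {..<j})) \<in> borel_measurable Fin"
        by (rule measurable_compose[OF RT \<phi>m])
    qed
    show "integrable Fin (\<lambda>z. c * Mo z)"
      by (rule integrable_mult_right[OF Fin_moment])
    fix z s assume zF: "z \<in> space Fin"
    then have z: "z \<in> SN" by (simp add: space_Fin)
    show "((\<lambda>s. \<phi> (restrict (T s z) {..<j})) has_real_derivative
        (\<Sum>l<j. pder \<phi> (restrict (T s z) {..<j}) l (V (T s z) l))) (at s)"
    proof (rule chain[OF C])
      show "restrict (T s' z) {..<j} \<in> space (cfg_space j)" for s' by (simp add: space_cfg)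
      fix l assume l: "l < j"
      have "(\<lambda>s'. restrict (T s' z) {..<j} l) = (\<lambda>s'. T s' z l)" using l by (simp add: fun_eq_iff)
      then show "((\<lambda>s'. restrict (T s' z) {..<j} l) has_vector_derivative V (T s z) l) (at s)"
        using flow_deriv[OF z, of l s] l j by simp
    qed
  next
    fix z s assume zF: "z \<in> space Fin" and s: "s \<in> {t - 1..t + 1}"
    then have z: "z \<in> SN" by (simp add: space_Fin)
    have st: "\<bar>s\<bar> \<le> \<bar>t\<bar> + 1" using s by auto
    have "\<bar>\<Sum>l<j. pder \<phi> (restrict (T s z) {..<j}) l (V (T s z) l)\<bar> \<le>
        (\<Sum>l<j. B * (2 * L * exp (2 * L * (\<bar>t\<bar> + 1)) * Mo z))"
    proof (rule order.trans[OF sum_abs], rule sum_mono)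
      fix l assume l: "l \<in> {..<j}"
      have "\<bar>pder \<phi> (restrict (T s z) {..<j}) l (V (T s z) l)\<bar> \<le> B * norm (V (T s z) l)"
        using l by (intro B) (auto simp: space_cfg)
      also have "\<dots> \<le> B * (2 * L * exp (2 * L * \<bar>s\<bar>) * Mo z)"
        using l j by (intro mult_left_mono V_T_bound z B0) auto
      also have "\<dots> \<le> B * (2 * L * exp (2 * L * (\<bar>t\<bar> + 1)) * Mo z)"
        using exp_mono_t[OF st] L_nonneg B0 Mo_nonneg
        by (intro mult_left_mono mult_right_mono) auto
      finally show "\<bar>pder \<phi> (restrict (T s z) {..<j}) l (V (T s z) l)\<bar> \<le> B * (2 * L * exp (2 * L * (\<bar>t\<bar> + 1)) * Mo z)" .
    qed
    also have "\<dots> = c * Mo z" by (simp add: c_def)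
    finally show "\<bar>\<Sum>l<j. pder \<phi> (restrict (T s z) {..<j}) l (V (T s z) l)\<bar> \<le> c * Mo z" .
  qed
  then show ?thesis unfolding eqf .
qed

end


context ctxF begin

lemma main_formula:
  assumes C: "C1b j \<phi>" and j: "1 \<le> j" "j \<le> N"
  shows "(\<integral>z. (\<Sum>l<j. pder \<phi> (restrict (T t z) {..<j}) l (V (T t z) l)) \<partial>Fin) =
    (1 / real N) * (\<Sum>k<j. \<Sum>l<j.
        \<integral>z. pder \<phi> z l (K (z l) (z k)) \<partial>(marg (distr Fin (cfg_space N) (T t)) j))
    + (if j < N then
        (real (N - j) / real N) * (\<Sum>l<j.
          \<integral>z. pder \<phi> (restrict z {..<j}) l (K (z l) (z j))
            \<partial>(marg (distr Fin (cfg_space N) (T t)) (j + 1)))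
       else 0)"
proof -
  define G where "G l k z = pder \<phi> (restrict (T t z) {..<j}) l (K (T t z l) (T t z k))" for l k z
  define A where "A k l = (\<integral>z. pder \<phi> z l (K (z l) (z k)) \<partial>(marg (distr Fin (cfg_space N) (T t)) j))" for k l
  define Cc where "Cc l = (\<integral>z. pder \<phi> (restrict z {..<j}) l (K (z l) (z j))
            \<partial>(marg (distr Fin (cfg_space N) (T t)) (j + 1)))" for l
  obtain B where B0: "B \<ge> 0" and B: "\<And>l z v. l < j \<Longrightarrow> z \<in> space (cfg_space j) \<Longrightarrow> \<bar>pder \<phi> z l v\<bar> \<le> B * norm v"
    using pder_B[OF C] by blast
  have RT: "(\<lambda>z. restrict (T t z) {..<j}) \<in> measurable Fin (cfg_space j)"
    by (rule measurable_compose[OF Tm R_meas[OF j(2)]])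
  have Gm: "(\<lambda>z. G l k z) \<in> borel_measurable Fin" if l: "l < j" for l k
    unfolding G_def by (intro pder_meas[OF C l] RT K_meas Tc_meas)
  have Gi: "integrable Fin (\<lambda>z. G l k z)" if l: "l < j" and k: "k < N" for l k
  proof (rule Bochner_Integration.integrable_bound[OF integrable_mult_right[OF Fin_moment, of "B * (2 * L * exp (2 * L * \<bar>t\<bar>))"] Gm[OF l]])
    show "AE z in Fin. norm (G l k z) \<le> norm (B * (2 * L * exp (2 * L * \<bar>t\<bar>)) * Mo z)"
    proof (rule AE_I2)
      fix z assume "z \<in> space Fin"
      then have z: "z \<in> SN" by (simp add: space_Fin)
      have "norm (G l k z) \<le> B * norm (K (T t z l) (T t z k))"
        unfolding G_def using B[OF l, of "restrict (T t z) {..<j}"] by (simp add: space_cfg)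
      also have "\<dots> \<le> B * (2 * L * exp (2 * L * \<bar>t\<bar>) * Mo z)"
        using l k j by (intro mult_left_mono K_T_bound z B0) auto
      also have "\<dots> \<le> norm (B * (2 * L * exp (2 * L * \<bar>t\<bar>)) * Mo z)"
        by (simp add: mult.assoc)
      finally show "norm (G l k z) \<le> norm (B * (2 * L * exp (2 * L * \<bar>t\<bar>)) * Mo z)" .
    qed
  qed
  have pt: "(\<Sum>l<j. pder \<phi> (restrict (T t z) {..<j}) l (V (T t z) l)) = (\<Sum>l<j. (1 / real N) * (\<Sum>k<N. G l k z))" for z
  proof (rule sum.cong[OF refl])
    fix l assume "l \<in> {..<j}"
    then have l: "l < j" by simp
    have lin: "linear (pder \<phi> (restrict (T t z) {..<j}) l)"
      by (rule pder_linear[OF C _ l]) (simp add: space_cfg)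
    show "pder \<phi> (restrict (T t z) {..<j}) l (V (T t z) l) = (1 / real N) * (\<Sum>k<N. G l k z)"
      unfolding V_def G_def using lin by (simp add: linear_cmul linear_sum o_def sum_divide_distrib)
  qed
  have "(\<integral>z. (\<Sum>l<j. pder \<phi> (restrict (T t z) {..<j}) l (V (T t z) l)) \<partial>Fin) =
      (\<integral>z. (\<Sum>l<j. (1 / real N) * (\<Sum>k<N. G l k z)) \<partial>Fin)"
    by (simp add: pt)
  also have "\<dots> = (\<Sum>l<j. \<integral>z. (1 / real N) * (\<Sum>k<N. G l k z) \<partial>Fin)"
    by (rule Bochner_Integration.integral_sum) (use j in \<open>auto intro!: integrable_mult_right integrable_sum Gi\<close>)
  also have "\<dots> = (\<Sum>l<j. (1 / real N) * (\<Sum>k<N. \<integral>z. G l k z \<partial>Fin))"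
  proof (rule sum.cong[OF refl])
    fix l assume "l \<in> {..<j}"
    then have l: "l < j" by simp
    show "(\<integral>z. (1 / real N) * (\<Sum>k<N. G l k z) \<partial>Fin) = (1 / real N) * (\<Sum>k<N. \<integral>z. G l k z \<partial>Fin)"
      by (simp add: Bochner_Integration.integral_sum Gi[OF l])
  qed
  also have "\<dots> = (\<Sum>l<j. (1 / real N) * ((\<Sum>k<j. A k l) + (if j < N then real (N - j) * Cc l else 0)))"
  proof (rule sum.cong[OF refl])
    fix l assume "l \<in> {..<j}"
    then have l: "l < j" by simp
    have split: "{..<N} = {..<j} \<union> {j..<N}" using j by auto
    have s1: "(\<Sum>k<j. \<integral>z. G l k z \<partial>Fin) = (\<Sum>k<j. A k l)"
    proof (rule sum.cong[OF refl])
      fix k assume "k \<in> {..<j}"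
      then have k: "k < j" by simp
      have gm: "(\<lambda>z. pder \<phi> z l (K (z l) (z k))) \<in> borel_measurable (cfg_space j)"
        by (intro pder_meas[OF C l] measurable_ident_sets[OF refl] K_meas coord_meas)
      show "(\<integral>z. G l k z \<partial>Fin) = A k l"
        unfolding A_def int_marg[OF gm j(2)] G_def using l k by simp
    qed
    have s2: "(\<Sum>k\<in>{j..<N}. \<integral>z. G l k z \<partial>Fin) = (if j < N then real (N - j) * Cc l else 0)"
    proof (cases "j < N")
      case True
      have "(\<Sum>k\<in>{j..<N}. \<integral>z. G l k z \<partial>Fin) = (\<Sum>k\<in>{j..<N}. Cc l)"
      proof (rule sum.cong[OF refl])
        fix k assume "k \<in> {j..<N}"
        then have jk: "j \<le> k" "k < N" by auto
        have gm: "(\<lambda>z. pder \<phi> (restrict z {..<j}) l (K (z l) (z j))) \<in> borel_measurable (cfg_space (j + 1))"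
          by (intro pder_meas[OF C l] R_meas K_meas coord_meas) simp
        have rr: "restrict (restrict f {..<j+1}) {..<j} = restrict f {..<j}" for f :: "nat \<Rightarrow> 'a"
          by (auto simp: restrict_def fun_eq_iff)
        have ii: "{..<Suc j} \<inter> {..<j} = {..<j}" by auto
        have "(\<integral>z. G l k z \<partial>Fin) = (\<integral>z. G l j z \<partial>Fin)"
          unfolding G_def by (rule sym_swap[OF C l jk])
        also have "\<dots> = Cc l"
          using True l unfolding Cc_def int_marg[OF gm, of t, OF Suc_leI[OF True, unfolded Suc_eq_plus1]]
          by (intro Bochner_Integration.integral_cong) (simp_all add: G_def rr ii)
        finally show "(\<integral>z. G l k z \<partial>Fin) = Cc l" .
      qed
      then show ?thesis using True by simp
    next
      case False
      then show ?thesis using j by simp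
    qed
    show "(1 / real N) * (\<Sum>k<N. \<integral>z. G l k z \<partial>Fin) = (1 / real N) * ((\<Sum>k<j. A k l) + (if j < N then real (N - j) * Cc l else 0))"
      unfolding split by (subst sum.union_disjoint) (auto simp: s1 s2)
  qed
  also have "\<dots> = (1 / real N) * (\<Sum>k<j. \<Sum>l<j. A k l)
      + (if j < N then (real (N - j) / real N) * (\<Sum>l<j. Cc l) else 0)"
  proof -
    define X where "X l = (if j < N then real (N - j) * Cc l else 0)" for l
    have e1: "(\<Sum>l<j. (1 / real N) * ((\<Sum>k<j. A k l) + X l)) = (1 / real N) * (\<Sum>l<j. \<Sum>k<j. A k l) + (1 / real N) * (\<Sum>l<j. X l)"
      by (simp add: distrib_left sum.distrib sum_distrib_left)
    have e2: "(\<Sum>l<j. \<Sum>k<j. A k l) = (\<Sum>k<j. \<Sum>l<j. A k l)" by (rule sum.swap)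
    have e3: "(1 / real N) * (\<Sum>l<j. X l) = (if j < N then (real (N - j) / real N) * (\<Sum>l<j. Cc l) else 0)"
    proof (cases "j < N")
      case True
      have "(\<Sum>l<j. X l) = real (N - j) * (\<Sum>l<j. Cc l)" using True by (simp add: X_def sum_distrib_left)
      then show ?thesis using True by simp
    qed (simp add: X_def)
    show ?thesis using e1 e2 e3 unfolding X_def by simp
  qed
  finally show ?thesis unfolding A_def Cc_def .
qed

end

theorem mainTheorem7:
  fixes K :: "'a::euclidean_space \<Rightarrow> 'a \<Rightarrow> 'a"
    and N :: nat and L :: real
    and Fin :: "(nat \<Rightarrow> 'a) measure"
    and T :: "real \<Rightarrow> (nat \<Rightarrow> 'a) \<Rightarrow> (nat \<Rightarrow> 'a)"
  assumes K_C1: "C1_kernel K"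
    and HK1: "\<And>z z'. K z z' = - K z' z"
    and L_nonneg: "L \<ge> 0"
    and HK2a: "\<And>z z' v. norm (frechet_derivative (\<lambda>x. K x z') (at z) v) \<le> L * norm v"
    and HK2b: "\<And>z z' v. norm (frechet_derivative (\<lambda>y. K z y) (at z') v) \<le> L * norm v"
    and Fin_sets: "sets Fin = sets (cfg_space N)"
    and Fin_prob: "prob_space Fin"
    and Fin_sym: "symmetric_measure N Fin"
    and Fin_moment: "integrable Fin (\<lambda>z. \<Sum>i<N. norm (z i))"
    and flow: "is_flow N K T"
  shows "\<forall>j. 1 \<le> j \<and> j \<le> N \<longrightarrow>
     marg (distr Fin (cfg_space N) (T 0)) j = marg Fin j \<and>
     (\<forall>\<phi>. C1b j \<phi> \<longrightarrow>
       (\<forall>t. ((\<lambda>s. \<integral>z. \<phi> z \<partial>(marg (distr Fin (cfg_space N) (T s)) j))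
          has_real_derivative
            ((1 / real N) * (\<Sum>k<j. \<Sum>l<j.
                \<integral>z. pder \<phi> z l (K (z l) (z k)) \<partial>(marg (distr Fin (cfg_space N) (T t)) j))
             + (if j < N then
                 (real (N - j) / real N) * (\<Sum>l<j.
                   \<integral>z. pder \<phi> (restrict z {..<j}) l (K (z l) (z j))
                     \<partial>(marg (distr Fin (cfg_space N) (T t)) (j + 1)))
                else 0)))
          (at t)))"
proof (intro allI impI)
  fix j assume j: "1 \<le> j \<and> j \<le> N"
  then have Npos: "0 < N" by simp
  from j have j1: "1 \<le> j" and j2: "j \<le> N" by auto
  interpret ctxF K N L T Fin
    by (intro ctxF.intro ctx.intro ctxF_axioms.intro) (rule assms Npos)+
  have d0: "distr Fin (cfg_space N) (T 0) = Fin"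
  proof -
    have "distr Fin (cfg_space N) (T 0) = distr Fin (cfg_space N) (\<lambda>x. x)"
      by (rule distr_cong) (auto simp: space_Fin flow0)
    also have "\<dots> = Fin" by (rule distr_id2[OF Fin_sets[symmetric]])
    finally show ?thesis .
  qed
  show "marg (distr Fin (cfg_space N) (T 0)) j = marg Fin j \<and>
     (\<forall>\<phi>. C1b j \<phi> \<longrightarrow>
       (\<forall>t. ((\<lambda>s. \<integral>z. \<phi> z \<partial>(marg (distr Fin (cfg_space N) (T s)) j))
          has_real_derivative
            ((1 / real N) * (\<Sum>k<j. \<Sum>l<j.
                \<integral>z. pder \<phi> z l (K (z l) (z k)) \<partial>(marg (distr Fin (cfg_space N) (T t)) j))
             + (if j < N then
                 (real (N - j) / real N) * (\<Sum>l<j.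
                   \<integral>z. pder \<phi> (restrict z {..<j}) l (K (z l) (z j))
                     \<partial>(marg (distr Fin (cfg_space N) (T t)) (j + 1)))
                else 0)))
          (at t)))"
  proof (intro conjI allI impI)
    show "marg (distr Fin (cfg_space N) (T 0)) j = marg Fin j" by (simp add: d0)
  next
    fix \<phi> :: "(nat \<Rightarrow> 'a) \<Rightarrow> real" and t :: real
    assume C: "C1b j \<phi>"
    show "((\<lambda>s. \<integral>z. \<phi> z \<partial>(marg (distr Fin (cfg_space N) (T s)) j))
          has_real_derivative
            ((1 / real N) * (\<Sum>k<j. \<Sum>l<j.
                \<integral>z. pder \<phi> z l (K (z l) (z k)) \<partial>(marg (distr Fin (cfg_space N) (T t)) j))
             + (if j < N then
                 (real (N - j) / real N) * (\<Sum>l<j.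
                   \<integral>z. pder \<phi> (restrict z {..<j}) l (K (z l) (z j))
                     \<partial>(marg (distr Fin (cfg_space N) (T t)) (j + 1)))
                else 0)))
          (at t)"
      using main_deriv[OF C j1 j2, of t] unfolding main_formula[OF C j1 j2, of t] .
  qed
qed

end
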